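(* Let $H$ be an infinite-dimensional (not necessarily separable) Hilbert space and let $\mathcal{T}\subseteq B_1$. For $T\in\mathcal{T}$ define $\psi_T:B_1\to B_1$ by $\psi_T(A)=TA$. Then $\mathcal{T}$, regarded as a family of maps $H_1\to H_1$, is uniformly equicontinuous (UEC) if and only if the family $\{\psi_T\}_{T\in\mathcal{T}}$ of maps $B_1\to B_1$ is UEC.
   Context: $H_1$ is the closed unit ball of $H$ and $B_1$ the closed unit ball of $B(H)$. $H_1$ carries the (weak) uniformity whose basic entourages are the sets $\{(x,y)\in H_1\times H_1: |\langle x-y,z_i\rangle|<\epsilon,\ i=1,\dots,N\}$ with $z_i\in H_1$, $N\in\mathbb{N}$, $\epsilon>0$; $B_1$ carries the (weak operator) uniformity whose basic entourages are the sets $\{(A,B)\in B_1\times B_1: |\langle (A-B)w_i,z_i\rangle|<\epsilon,\ i=1,\dots,N\}$ with $w_i,z_i\in H_1$, $N\in\mathbb{N}$, $\epsilon>0$. A family $\mathcal{F}$ of maps from a uniform space $X$ to itself is uniformly equicontinuous (UEC) if for every entourage $U$ there is an entourage $W$ such that $(x,y)\in W$ implies $(f(x),f(y))\in U$ for all $f\in\mathcal{F}$. *)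

theory Defs
  imports "HOL-Analysis.Analysis"
begin

class chilbert = banach +
  fixes scaleC :: "complex \<Rightarrow> 'a \<Rightarrow> 'a"
    and cinner :: "'a \<Rightarrow> 'a \<Rightarrow> complex"
  assumes scaleC_of_real: "scaleC (complex_of_real r) x = scaleR r x"
    and scaleC_add_right: "scaleC a (x + y) = scaleC a x + scaleC a y"
    and scaleC_add_left: "scaleC (a + b) x = scaleC a x + scaleC b x"
    and scaleC_scaleC: "scaleC a (scaleC b x) = scaleC (a * b) x"
    and cinner_add_left: "cinner (x + y) z = cinner x z + cinner y z"
    and cinner_scaleC_left: "cinner (scaleC c x) y = c * cinner x y"
    and cinner_commute: "cinner x y = cnj (cinner y x)"
    and cinner_self: "cinner x x = complex_of_real ((norm x)\<^sup>2)"

definition infinite_dimensional :: "'a::chilbert itself \<Rightarrow> bool" where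
  "infinite_dimensional _ \<longleftrightarrow>
     \<not> (\<exists>S::'a set. finite S \<and> (\<forall>x. \<exists>c. x = (\<Sum>s\<in>S. scaleC (c s) s)))"

definition H1 :: "'a::chilbert set" where
  "H1 = {x. norm x \<le> 1}"

definition B1 :: "('a::chilbert \<Rightarrow> 'a) set" where
  "B1 = {A. (\<forall>x y. A (x + y) = A x + A y) \<and> (\<forall>c x. A (scaleC c x) = scaleC c (A x))
            \<and> (\<forall>x. norm (A x) \<le> norm x)}"

definition weak_basic :: "'a::chilbert set \<Rightarrow> real \<Rightarrow> ('a \<times> 'a) set" where
  "weak_basic Z \<epsilon> = {(x, y). x \<in> H1 \<and> y \<in> H1 \<and> (\<forall>z\<in>Z. cmod (cinner (x - y) z) < \<epsilon>)}"

definition weak_entourage :: "('a::chilbert \<times> 'a) set \<Rightarrow> bool" where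
  "weak_entourage U \<longleftrightarrow> U \<subseteq> H1 \<times> H1 \<and>
     (\<exists>Z \<epsilon>. finite Z \<and> Z \<subseteq> H1 \<and> \<epsilon> > 0 \<and> weak_basic Z \<epsilon> \<subseteq> U)"

definition wot_basic :: "('a::chilbert \<times> 'a) set \<Rightarrow> real \<Rightarrow> (('a \<Rightarrow> 'a) \<times> ('a \<Rightarrow> 'a)) set" where
  "wot_basic P \<epsilon> = {(A, B). A \<in> B1 \<and> B \<in> B1 \<and>
      (\<forall>(w, z)\<in>P. cmod (cinner (A w - B w) z) < \<epsilon>)}"

definition wot_entourage :: "(('a::chilbert \<Rightarrow> 'a) \<times> ('a \<Rightarrow> 'a)) set \<Rightarrow> bool" where
  "wot_entourage U \<longleftrightarrow> U \<subseteq> B1 \<times> B1 \<and>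
     (\<exists>P \<epsilon>. finite P \<and> P \<subseteq> H1 \<times> H1 \<and> \<epsilon> > 0 \<and> wot_basic P \<epsilon> \<subseteq> U)"

definition UEC :: "(('b \<times> 'b) set \<Rightarrow> bool) \<Rightarrow> ('b \<Rightarrow> 'b) set \<Rightarrow> bool" where
  "UEC ent F \<longleftrightarrow> (\<forall>U. ent U \<longrightarrow>
     (\<exists>W. ent W \<and> (\<forall>f\<in>F. \<forall>x y. (x, y) \<in> W \<longrightarrow> (f x, f y) \<in> U)))"

definition psi :: "('a \<Rightarrow> 'a) \<Rightarrow> ('a \<Rightarrow> 'a) \<Rightarrow> ('a \<Rightarrow> 'a)" where
  "psi T A = T \<circ> A"

end

theory Submission
  imports Defs
begin

lemma scaleC_diff_right: "scaleC a (x - y) = scaleC a x - scaleC a (y::'a::chilbert)"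
proof -
  have "scaleC a ((x - y) + y) = scaleC a (x - y) + scaleC a y" by (rule scaleC_add_right)
  then show ?thesis by (simp add: algebra_simps)
qed

lemma cinner_diff_left: "cinner (x - y) z = cinner x z - cinner (y::'a::chilbert) z"
proof -
  have "cinner ((x - y) + y) z = cinner (x - y) z + cinner y z" by (rule cinner_add_left)
  then show ?thesis by (simp add: algebra_simps)
qed

lemma cinner_add_right: "cinner x (y + z) = cinner x y + cinner (x::'a::chilbert) z"
  by (metis cinner_add_left cinner_commute complex_cnj_add)

lemma cinner_scaleC_right: "cinner x (scaleC c y) = cnj c * cinner (x::'a::chilbert) y"
  by (metis cinner_commute cinner_scaleC_left complex_cnj_mult)

lemma scaleC_one: "scaleC 1 (x::'a::chilbert) = x"
  by (metis scaleC_of_real of_real_1 scaleR_one)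

lemma cinner_bound:
  fixes v e :: "'a::chilbert"
  assumes "norm e = 1"
  shows "cmod (cinner v e) \<le> norm v"
proof -
  define c where "c = cinner v e"
  define r where "r = v - scaleC c e"
  have ee: "cinner e e = 1" using assms cinner_self[of e] by simp
  have re: "cinner r e = 0" unfolding r_def cinner_diff_left cinner_scaleC_left ee c_def by simp
  have er: "cinner e r = 0" using re cinner_commute[of e r] by simp
  have v: "v = r + scaleC c e" unfolding r_def by simp
  have "cinner v v = cinner r r + c * cnj c"
    unfolding v cinner_add_left cinner_add_right cinner_scaleC_left cinner_scaleC_right re er ee
    by simp
  also have "\<dots> = complex_of_real ((norm r)\<^sup>2 + (cmod c)\<^sup>2)"
    by (simp add: cinner_self complex_norm_square[symmetric] del: of_real_power)
  finally have "complex_of_real ((norm v)\<^sup>2) = complex_of_real ((norm r)\<^sup>2 + (cmod c)\<^sup>2)"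
    by (simp add: cinner_self)
  then have "(norm v)\<^sup>2 = (norm r)\<^sup>2 + (cmod c)\<^sup>2" using of_real_eq_iff by blast
  then have "(cmod c)\<^sup>2 \<le> (norm v)\<^sup>2" by simp
  then show ?thesis unfolding c_def by (rule power2_le_imp_le) simp
qed

lemma norm_scaleC: "norm (scaleC c (x::'a::chilbert)) = cmod c * norm x"
proof -
  have "cinner (scaleC c x) (scaleC c x) = c * cnj c * cinner x x"
    by (simp add: cinner_scaleC_left cinner_scaleC_right mult.assoc)
  then have "complex_of_real ((norm (scaleC c x))\<^sup>2) = complex_of_real ((cmod c)\<^sup>2) * complex_of_real ((norm x)\<^sup>2)"
    by (simp only: cinner_self complex_norm_square)
  also have "\<dots> = complex_of_real ((cmod c * norm x)\<^sup>2)"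
    by (simp add: power_mult_distrib)
  finally have "(norm (scaleC c x))\<^sup>2 = (cmod c * norm x)\<^sup>2" using of_real_eq_iff by blast
  then show ?thesis by (rule power2_eq_imp_eq) simp_all
qed

lemma B1_comp: "T \<in> B1 \<Longrightarrow> A \<in> B1 \<Longrightarrow> T \<circ> A \<in> B1"
  unfolding B1_def by (auto intro: order_trans)

lemma B1_H1: "A \<in> B1 \<Longrightarrow> w \<in> H1 \<Longrightarrow> A w \<in> H1"
  unfolding B1_def H1_def by (auto intro: order_trans)

lemma rank_one_B1:
  fixes x e :: "'a::chilbert"
  assumes "x \<in> H1" "norm e = 1"
  shows "(\<lambda>v. scaleC (cinner v e) x) \<in> B1"
proof -
  have "norm (scaleC (cinner v e) x) \<le> norm v" for v
  proof -
    have "norm (scaleC (cinner v e) x) = cmod (cinner v e) * norm x" by (rule norm_scaleC)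
    also have "\<dots> \<le> norm v * 1"
      using cinner_bound[OF assms(2), of v] assms(1) unfolding H1_def
      by (intro mult_mono) auto
    finally show ?thesis by simp
  qed
  then show ?thesis unfolding B1_def
    by (auto simp: cinner_add_left scaleC_add_left cinner_scaleC_left scaleC_scaleC)
qed

theorem proposition1:
  fixes \<T> :: "('a::chilbert \<Rightarrow> 'a) set"
  assumes "infinite_dimensional TYPE('a)"
    and "\<T> \<subseteq> B1"
  shows "UEC weak_entourage \<T> \<longleftrightarrow> UEC wot_entourage (psi ` \<T>)"
proof
  assume uec: "UEC weak_entourage \<T>"
  show "UEC wot_entourage (psi ` \<T>)"
    unfolding UEC_def
  proof (intro allI impI)
    fix U :: "(('a \<Rightarrow> 'a) \<times> ('a \<Rightarrow> 'a)) set" assume "wot_entourage U"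
    then obtain P :: "('a \<times> 'a) set" and \<epsilon> where P: "finite P" "P \<subseteq> H1 \<times> H1" "\<epsilon> > 0" "wot_basic P \<epsilon> \<subseteq> U"
      unfolding wot_entourage_def by blast
    have "weak_entourage (weak_basic (snd ` P) \<epsilon>)"
      unfolding weak_entourage_def using P
      by (intro conjI exI[of _ "snd ` P"] exI[of _ \<epsilon>]) (auto simp: weak_basic_def)
    then obtain W0 :: "('a \<times> 'a) set" where W0: "weak_entourage W0"
      "\<forall>T\<in>\<T>. \<forall>x y. (x, y) \<in> W0 \<longrightarrow> (T x, T y) \<in> weak_basic (snd ` P) \<epsilon>"
      using uec unfolding UEC_def by blast
    then obtain Z' \<epsilon>' where Z': "finite Z'" "Z' \<subseteq> H1" "\<epsilon>' > 0" "weak_basic Z' \<epsilon>' \<subseteq> W0"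
      unfolding weak_entourage_def by blast
    define W where "W = wot_basic ((fst ` P) \<times> Z') \<epsilon>'"
    have "wot_entourage W"
      unfolding wot_entourage_def
    proof (intro conjI exI[of _ "(fst ` P) \<times> Z'"] exI[of _ \<epsilon>'])
      show "W \<subseteq> B1 \<times> B1" unfolding W_def wot_basic_def by auto
      show "finite (fst ` P \<times> Z')" using P(1) Z'(1) by simp
      show "fst ` P \<times> Z' \<subseteq> H1 \<times> H1" using P(2) Z'(2) by auto
    qed (use Z' W_def in auto)
    moreover have "(f A, f B) \<in> U" if fT: "f \<in> psi ` \<T>" and ABW: "(A, B) \<in> W" for f A B
    proof -
      obtain T where T: "T \<in> \<T>" "f = psi T" using fT by blast
      have AB: "A \<in> B1" "B \<in> B1" using ABW unfolding W_def wot_basic_def by auto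
      have ABP: "\<forall>(w, z)\<in>(fst ` P) \<times> Z'. cmod (cinner (A w - B w) z) < \<epsilon>'"
        using ABW unfolding W_def wot_basic_def by simp
      have "(psi T A, psi T B) \<in> wot_basic P \<epsilon>"
        unfolding wot_basic_def
      proof (clarify, intro conjI)
        show "psi T A \<in> B1" "psi T B \<in> B1" unfolding psi_def
          using B1_comp AB T assms(2) by blast+
        show "\<forall>(w, z)\<in>P. cmod (cinner (psi T A w - psi T B w) z) < \<epsilon>"
        proof clarify
          fix w z assume wz: "(w, z) \<in> P"
          have w: "w \<in> H1" using wz P(2) by auto
          have wP: "w \<in> fst ` P" using wz by force
          have "\<forall>z'\<in>Z'. cmod (cinner (A w - B w) z') < \<epsilon>'"
          proof
            fix z' assume "z' \<in> Z'"
            then have "(w, z') \<in> (fst ` P) \<times> Z'" using wP by simp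
            then show "cmod (cinner (A w - B w) z') < \<epsilon>'" using ABP by auto
          qed
          then have "(A w, B w) \<in> weak_basic Z' \<epsilon>'"
            unfolding weak_basic_def
            using B1_H1[OF AB(1) w] B1_H1[OF AB(2) w] by simp
          then have "(A w, B w) \<in> W0" using Z'(4) by blast
          then have "(T (A w), T (B w)) \<in> weak_basic (snd ` P) \<epsilon>" using W0(2) T(1) by blast
          moreover have "z \<in> snd ` P" using wz by force
          ultimately show "cmod (cinner (psi T A w - psi T B w) z) < \<epsilon>"
            unfolding weak_basic_def psi_def by auto
        qed
      qed
      then show ?thesis using P(4) T(2) by blast
    qed
    ultimately show "\<exists>W. wot_entourage W \<and> (\<forall>f\<in>psi ` \<T>. \<forall>x y. (x, y) \<in> W \<longrightarrow> (f x, f y) \<in> U)"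
      by blast
  qed
next
  assume uec: "UEC wot_entourage (psi ` \<T>)"
  obtain x0 :: 'a where "x0 \<noteq> 0"
  proof -
    have "\<exists>x0::'a. x0 \<noteq> 0"
    proof (rule ccontr)
      assume "\<not> ?thesis"
      then have "\<exists>S::'a set. finite S \<and> (\<forall>x. \<exists>c. x = (\<Sum>s\<in>S. scaleC (c s) s))"
        by (intro exI[of _ "{}"]) auto
      then show False using assms(1) unfolding infinite_dimensional_def by blast
    qed
    then show ?thesis using that by blast
  qed
  define e where "e = scaleR (1 / norm x0) x0"
  have ne: "norm e = 1" unfolding e_def using \<open>x0 \<noteq> 0\<close> by simp
  have eH: "e \<in> H1" unfolding H1_def using ne by simp
  define R where "R x = (\<lambda>v. scaleC (cinner v e) x)" for x :: 'a
  have Re: "R x e = x" for x unfolding R_def using cinner_self[of e] ne by (simp add: scaleC_one)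
  show "UEC weak_entourage \<T>"
    unfolding UEC_def
  proof (intro allI impI)
    fix U :: "('a \<times> 'a) set" assume "weak_entourage U"
    then obtain Z :: "'a set" and \<epsilon> where Z: "finite Z" "Z \<subseteq> H1" "\<epsilon> > 0" "weak_basic Z \<epsilon> \<subseteq> U"
      unfolding weak_entourage_def by blast
    have "wot_entourage (wot_basic ({e} \<times> Z) \<epsilon>)"
      unfolding wot_entourage_def
    proof (intro conjI exI[of _ "{e} \<times> Z"] exI[of _ \<epsilon>])
      show "wot_basic ({e} \<times> Z) \<epsilon> \<subseteq> B1 \<times> B1" unfolding wot_basic_def by auto
      show "{e} \<times> Z \<subseteq> H1 \<times> H1" using Z(2) eH by auto
    qed (use Z(1,3) in auto)
    then have "\<exists>W. wot_entourage W \<and> (\<forall>f\<in>psi ` \<T>. \<forall>A B. (A, B) \<in> W \<longrightarrow> (f A, f B) \<in> wot_basic ({e} \<times> Z) \<epsilon>)"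
      using uec unfolding UEC_def by (elim allE[where x="wot_basic ({e} \<times> Z) \<epsilon>"]) (erule mp)
    then obtain W' :: "(('a \<Rightarrow> 'a) \<times> ('a \<Rightarrow> 'a)) set" where W': "wot_entourage W'"
      "\<forall>f\<in>psi ` \<T>. \<forall>A B. (A, B) \<in> W' \<longrightarrow> (f A, f B) \<in> wot_basic ({e} \<times> Z) \<epsilon>"
      by blast
    then obtain P' :: "('a \<times> 'a) set" and \<epsilon>' where P': "finite P'" "P' \<subseteq> H1 \<times> H1" "\<epsilon>' > 0" "wot_basic P' \<epsilon>' \<subseteq> W'"
      unfolding wot_entourage_def by blast
    define W where "W = weak_basic (snd ` P') \<epsilon>'"
    have "weak_entourage W"
      unfolding weak_entourage_def
    proof (intro conjI exI[of _ "snd ` P'"] exI[of _ \<epsilon>'])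
      show "W \<subseteq> H1 \<times> H1" unfolding W_def weak_basic_def by auto
      show "snd ` P' \<subseteq> H1" using P'(2) by auto
    qed (use P'(1,3) W_def in auto)
    moreover have "(T x, T y) \<in> U" if T: "T \<in> \<T>" and xy: "(x, y) \<in> W" for T x y
    proof -
      have xyH: "x \<in> H1" "y \<in> H1" using xy unfolding W_def weak_basic_def by auto
      have TB: "T \<in> B1" using T assms(2) by blast
      have "(R x, R y) \<in> wot_basic P' \<epsilon>'"
        unfolding wot_basic_def
      proof (clarify, intro conjI)
        show "R x \<in> B1" "R y \<in> B1" unfolding R_def using rank_one_B1 xyH ne by blast+
        show "\<forall>(w, z)\<in>P'. cmod (cinner (R x w - R y w) z) < \<epsilon>'"
        proof clarify
          fix w z assume wz: "(w, z) \<in> P'"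
          have w: "norm w \<le> 1" using wz P' unfolding H1_def by auto
          have lt: "cmod (cinner (x - y) z) < \<epsilon>'"
          proof -
            have "z \<in> snd ` P'" using wz by force
            then show ?thesis using xy unfolding W_def weak_basic_def by auto
          qed
          have "cinner (R x w - R y w) z = cinner w e * cinner (x - y) z"
            unfolding R_def scaleC_diff_right[symmetric] cinner_scaleC_left ..
          then have "cmod (cinner (R x w - R y w) z) = cmod (cinner w e) * cmod (cinner (x - y) z)"
            by (simp add: norm_mult)
          also have "\<dots> \<le> 1 * cmod (cinner (x - y) z)"
            using cinner_bound[OF ne, of w] w by (intro mult_right_mono) auto
          also have "\<dots> < \<epsilon>'" using lt by simp
          finally show "cmod (cinner (R x w - R y w) z) < \<epsilon>'" .
        qed
      qed
      then have "(psi T (R x), psi T (R y)) \<in> wot_basic ({e} \<times> Z) \<epsilon>"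
        using W'(2) P'(4) T by blast
      then have "\<forall>z\<in>Z. cmod (cinner (T x - T y) z) < \<epsilon>"
        unfolding wot_basic_def psi_def using Re by auto
      moreover have "T x \<in> H1" "T y \<in> H1" using B1_H1 TB xyH by blast+
      ultimately show ?thesis using Z unfolding weak_basic_def by blast
    qed
    ultimately show "\<exists>W. weak_entourage W \<and> (\<forall>f\<in>\<T>. \<forall>x y. (x, y) \<in> W \<longrightarrow> (f x, f y) \<in> U)"
      by blast
  qed
qed

end
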